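(* Let $(S,\mathcal B_S,\mu)$ be a standard Lebesgue space with $\sigma$-finite measure $\mu$, and let $f,g:S\to[0,\infty)$ be measurable with $\int_S f\,d\mu=\int_S g\,d\mu=1$. Let $(X,Y)$ be a random vector with \[ \mathbb P(X\le x,Y\le y)=\exp\Big\{-\int_S \max\Big(\frac{f(s)}{x},\frac{g(s)}{y}\Big)\mu(ds)\Big\},\qquad x,y>0 . \] For $t\ge 0$ let $D_t=\{s\in S: f(s)/g(s)\le t\}$ and $E_t=S\setminus D_t$ (with the convention $1/0=\infty$), and for measurable $h$ and $A\subset S$ write $\|h\|_A=\int_A|h(s)|\mu(ds)$. Then for all $t\ge 0$ and $u\ge 0$, \[ \mathbb P(X/Y\le t,\;Y>u)=\Big(1+\frac{\|f\|_{E_t}}{t\,\|g\|_{D_t}}\Big)^{-1}\Big[1-\exp\Big(-\frac{\|g\|_{D_t}+t^{-1}\|f\|_{E_t}}{u}\Big)\Big]. \] In particular, when $\mu(E_t)=0$, we have $\mathbb P(X/Y>t)=0$.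
   Context: $(X,Y)$ is a standard bivariate $1$-Fréchet random vector given through its spectral functions $f,g$ (equivalently $(X,Y)=(\int^e_S f\,dM,\int^e_S g\,dM)$ for a $1$-Fréchet random sup-measure $M$ with control measure $\mu$). Conventions: $1/0=\infty$; for $u=0$, $\exp(-c/0)=0$. *)

theory Defs
  imports "HOL-Probability.Probability"
begin

text \<open>Right-hand side of the formula, with a = norm of g on D_t, b = norm of f on E_t.
  The factor (1 + b/(t a))^(-1) is written t a / (t a + b) (equal under 1/0 = infinity,
  since t a + b > 0 always holds under the hypotheses); the bracket
  1 - exp(-(a + b/t)/u) equals 1 when u = 0 (convention exp(-c/0) = 0) or t = 0 (b/0 = infinity).\<close>
definition ratio_rhs :: "real \<Rightarrow> real \<Rightarrow> real \<Rightarrow> real \<Rightarrow> real" where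
  "ratio_rhs a b t u =
     (t * a / (t * a + b)) *
     (if t = 0 \<or> u = 0 then 1 else 1 - exp (- (a + b / t) / u))"

end

theory Submission
  imports Defs
begin


locale frech =
  fixes M :: "'s measure" and P :: "'w measure"
    and f g :: "'s \<Rightarrow> real" and X Y :: "'w \<Rightarrow> real"
  assumes fm: "f \<in> borel_measurable M" and gm: "g \<in> borel_measurable M"
    and fnn: "\<And>s. s \<in> space M \<Longrightarrow> f s \<ge> 0" and gnn: "\<And>s. s \<in> space M \<Longrightarrow> g s \<ge> 0"
    and fi: "integrable M f" and gi: "integrable M g"
    and f1: "integral\<^sup>L M f = 1" and g1: "integral\<^sup>L M g = 1"
    and ps: "prob_space P"
    and Xm: "X \<in> borel_measurable P" and Ym: "Y \<in> borel_measurable P"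
    and F: "\<And>x y. x > 0 \<Longrightarrow> y > 0 \<Longrightarrow>
           measure P {\<omega> \<in> space P. X \<omega> \<le> x \<and> Y \<omega> \<le> y}
             = exp (- (integral\<^sup>L M (\<lambda>s. max (f s / x) (g s / y))))"
begin

definition Dset :: "real \<Rightarrow> 's set" where "Dset r = {s \<in> space M. f s \<le> r * g s}"
definition cc :: "real \<Rightarrow> real" where "cc r = integral\<^sup>L M (\<lambda>s. max (f s / r) (g s))"
definition aa :: "real \<Rightarrow> real" where "aa r = integral\<^sup>L M (\<lambda>s. indicator (Dset r) s * g s)"
definition V :: "real \<Rightarrow> real \<Rightarrow> real" where "V x y = integral\<^sup>L M (\<lambda>s. max (f s / x) (g s / y))"

lemma Dset_sets[measurable]: "Dset r \<in> sets M"
  unfolding Dset_def using fm gm by measurable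

lemma int_max: "integrable M (\<lambda>s. max (f s / x) (g s / y))"
  by (intro integrable_max integrable_divide fi gi)

lemma int_ind: "integrable M (\<lambda>s. indicator (Dset r) s * g s)"
  using integrable_real_mult_indicator[OF Dset_sets gi] by (simp add: mult.commute)

lemma int_max1: "integrable M (\<lambda>s. max (f s / r) (g s))"
  using int_max[of r 1] by simp

lemma int_comb_i: "integrable M (\<lambda>s. p * max (f s / r) (g s) + q * (indicator (Dset \<sigma>) s * g s))"
  by (intro Bochner_Integration.integrable_add Bochner_Integration.integrable_mult_right int_max1 int_ind)

lemma int_comb: "integral\<^sup>L M (\<lambda>s. p * max (f s / r) (g s) + q * (indicator (Dset \<sigma>) s * g s))
   = p * cc r + q * aa \<sigma>"
  unfolding cc_def aa_def
  by (subst Bochner_Integration.integral_add) (auto intro!: int_max1 int_ind Bochner_Integration.integrable_mult_right)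

lemma V_le:
  assumes "\<And>s. s \<in> space M \<Longrightarrow> max (f s / x) (g s / y) \<le> p * max (f s / r) (g s) + q * (indicator (Dset \<sigma>) s * g s)"
  shows "V x y \<le> p * cc r + q * aa \<sigma>"
proof -
  have "V x y \<le> integral\<^sup>L M (\<lambda>s. p * max (f s / r) (g s) + q * (indicator (Dset \<sigma>) s * g s))"
    unfolding V_def using assms by (intro integral_mono int_max int_comb_i) auto
  then show ?thesis using int_comb by simp
qed

lemma V_ge:
  assumes "\<And>s. s \<in> space M \<Longrightarrow> max (f s / x) (g s / y) \<ge> p * max (f s / r) (g s) + q * (indicator (Dset \<sigma>) s * g s)"
  shows "V x y \<ge> p * cc r + q * aa \<sigma>"
proof -
  have "V x y \<ge> integral\<^sup>L M (\<lambda>s. p * max (f s / r) (g s) + q * (indicator (Dset \<sigma>) s * g s))"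
    unfolding V_def using assms by (intro integral_mono int_max int_comb_i) auto
  then show ?thesis using int_comb by simp
qed

lemma ev_sets[measurable]: "{\<omega> \<in> space P. X \<omega> \<le> x \<and> Y \<omega> \<le> y} \<in> sets P"
  using Xm Ym by measurable

lemma cell_sets[measurable]: "{\<omega> \<in> space P. X \<omega> \<le> x \<and> y1 < Y \<omega> \<and> Y \<omega> \<le> y2} \<in> sets P"
  using Xm Ym by measurable

lemma cell:
  assumes "x > 0" "0 < y1" "y1 \<le> y2"
  shows "measure P {\<omega> \<in> space P. X \<omega> \<le> x \<and> y1 < Y \<omega> \<and> Y \<omega> \<le> y2} = exp (- V x y2) - exp (- V x y1)"
proof -
  have "{\<omega> \<in> space P. X \<omega> \<le> x \<and> y1 < Y \<omega> \<and> Y \<omega> \<le> y2} =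
     {\<omega> \<in> space P. X \<omega> \<le> x \<and> Y \<omega> \<le> y2} - {\<omega> \<in> space P. X \<omega> \<le> x \<and> Y \<omega> \<le> y1}"
    using assms by auto
  also have "measure P \<dots> = measure P {\<omega> \<in> space P. X \<omega> \<le> x \<and> Y \<omega> \<le> y2} - measure P {\<omega> \<in> space P. X \<omega> \<le> x \<and> Y \<omega> \<le> y1}"
    using assms by (intro finite_measure.finite_measure_Diff prob_space.axioms(1)[OF ps] ev_sets) auto
  finally show ?thesis using F assms unfolding V_def by simp
qed

end


lemma pw_up:
  fixes F G t s h k :: real
  assumes "F \<ge> 0" "G \<ge> 0" "t > 0" "h > 0" "k \<ge> 1" "k*(s-t) \<ge> t"
  shows "max (F / (t/(k*h))) (G / (1/((k+1)*h))) \<le> (k*h) * max (F/t) G + h * (if F \<le> s*G then G else 0)"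
proof -
  have e1: "F / (t/(k*h)) = (k*h) * (F/t)" using assms by (simp add: field_simps)
  have e2: "G / (1/((k+1)*h)) = (k*h)*G + h*G" by (simp add: algebra_simps)
  have m1: "(k*h) * (F/t) \<le> (k*h) * max (F/t) G" using assms by (intro mult_left_mono) auto
  have m2: "(k*h)*G \<le> (k*h) * max (F/t) G" using assms by (intro mult_left_mono) auto
  show ?thesis
  proof (cases "F \<le> s*G")
    case True
    have "max (F / (t/(k*h))) (G / (1/((k+1)*h))) = max ((k*h) * (F/t)) ((k*h)*G + h*G)"
      by (simp only: e1 e2)
    also have "\<dots> \<le> (k*h) * max (F/t) G + h * G"
      using m1 m2 assms by (intro max.boundedI) (auto intro: order_trans)
    finally show ?thesis using True by simp
  next
    case False
    have "k*F \<ge> k*(s*G)" using False assms by (intro mult_left_mono) auto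
    moreover have "k*(s-t)*G \<ge> t*G" using assms by (intro mult_right_mono) auto
    ultimately have "k*F \<ge> (k+1)*t*G" by (simp add: algebra_simps)
    then have "(k+1)*G \<le> k*F/t" using assms by (simp add: field_simps)
    then have "(k+1)*G*h \<le> k*F/t*h" using assms by (intro mult_right_mono) auto
    then have B: "G / (1/((k+1)*h)) \<le> (k*h) * (F/t)" by (simp add: algebra_simps)
    have A: "F / (t/(k*h)) \<le> (k*h) * max (F/t) G" by (subst e1) (rule m1)
    have "max (F / (t/(k*h))) (G / (1/((k+1)*h))) \<le> (k*h) * max (F/t) G"
      using A B m1 by (intro max.boundedI) auto
    then show ?thesis using False by simp
  qed
qed

lemma pw_eq:
  fixes F G r p :: real
  assumes "r > 0" "p > 0"
  shows "max (F / (r/p)) (G / (1/p)) = p * max (F/r) G"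
  using assms by (simp add: max_mult_distrib_left field_simps)

lemma pw_lo:
  fixes F G t s h k :: real
  assumes "F \<ge> 0" "G \<ge> 0" "t > 0" "h > 0" "k \<ge> 1" "k*(s-t) \<ge> t" "s > t"
  shows "max (F / (s/((k+1)*h))) (G / (1/(k*h))) \<le> ((k+1)*h) * max (F/s) G + (-h) * (if F \<le> t*G then G else 0)"
proof -
  have e1: "F / (s/((k+1)*h)) = ((k+1)*h) * (F/s)" using assms by (simp add: field_simps)
  have e2: "G / (1/(k*h)) = ((k+1)*h)*G - h*G" by (simp add: algebra_simps)
  have m1: "((k+1)*h) * (F/s) \<le> ((k+1)*h) * max (F/s) G" using assms by (intro mult_left_mono) auto
  have m2: "((k+1)*h)*G \<le> ((k+1)*h) * max (F/s) G" using assms by (intro mult_left_mono) auto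
  show ?thesis
  proof (cases "F \<le> t*G")
    case True
    have "(k+1)*F \<le> (k+1)*(t*G)" using True assms by (intro mult_left_mono) auto
    moreover have "t*G \<le> k*(s-t)*G" using assms by (intro mult_right_mono) auto
    ultimately have "(k+1)*F \<le> k*(s*G)" by (simp add: algebra_simps)
    then have "(k+1)*F/s \<le> k*G" using assms by (simp add: field_simps)
    then have "(k+1)*F/s*h \<le> k*G*h" using assms by (intro mult_right_mono) auto
    then have "F / (s/((k+1)*h)) \<le> G / (1/(k*h))" using e1 by (simp add: algebra_simps)
    moreover have "G / (1/(k*h)) = ((k+1)*h) * max (F/s) G - h * G"
    proof -
      have "t*G \<le> s*G" using assms by (intro mult_right_mono) auto
      then have "F \<le> s*G" using True by linarith
      then have "F/s \<le> G" using assms by (simp add: field_simps)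
      then show ?thesis by (simp add: algebra_simps max_def)
    qed
    ultimately show ?thesis using True by auto
  next
    case False
    have A: "F / (s/((k+1)*h)) \<le> ((k+1)*h) * max (F/s) G" by (subst e1) (rule m1)
    have B: "G / (1/(k*h)) \<le> ((k+1)*h) * max (F/s) G" using m2 assms by (subst e2) (smt (verit) mult_nonneg_nonneg)
    have "max (F / (s/((k+1)*h))) (G / (1/(k*h))) \<le> ((k+1)*h) * max (F/s) G"
      using A B by (intro max.boundedI) auto
    then show ?thesis using False by simp
  qed
qed

lemma R1:
  fixes c h a k :: real
  assumes "c > 0" "h > 0" "a \<ge> 0"
  shows "exp (-(k*h*c)) - exp (-(k*h*c + h*a)) \<le> a/c * (exp (-((k-1)*h*c)) - exp (-(k*h*c)))"
proof -
  have "exp (-(k*h*c)) - exp (-(k*h*c + h*a)) = exp (-(k*h*c)) * (1 - exp (-(h*a)))"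
    by (simp add: algebra_simps exp_add[symmetric])
  also have "\<dots> \<le> exp (-(k*h*c)) * (h*a)"
    using exp_ge_add_one_self[of "-(h*a)"] by (intro mult_left_mono) auto
  also have "\<dots> = a/c * (exp (-(k*h*c)) * (h*c))" using assms by simp
  also have "\<dots> \<le> a/c * (exp (-(k*h*c)) * (exp (h*c) - 1))"
    using exp_ge_add_one_self[of "h*c"] assms by (intro mult_left_mono) (auto simp: algebra_simps)
  also have "exp (-(k*h*c)) * (exp (h*c) - 1) = exp (-((k-1)*h*c)) - exp (-(k*h*c))"
    by (simp add: algebra_simps exp_add[symmetric])
  finally show ?thesis .
qed

lemma R2:
  fixes c h a k :: real
  assumes "c > 0" "h > 0" "a \<ge> 0"
  shows "exp (-((k+1)*h*c - h*a)) - exp (-((k+1)*h*c)) \<ge> a/c * (exp (-((k+1)*h*c)) - exp (-((k+2)*h*c)))"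
proof -
  have "a/c * (exp (-((k+1)*h*c)) - exp (-((k+2)*h*c))) = a/c * (exp (-((k+1)*h*c)) * (1 - exp (-(h*c))))"
    by (simp add: algebra_simps exp_add[symmetric])
  also have "\<dots> \<le> a/c * (exp (-((k+1)*h*c)) * (h*c))"
    using exp_ge_add_one_self[of "-(h*c)"] assms by (intro mult_left_mono) auto
  also have "\<dots> = exp (-((k+1)*h*c)) * (h*a)" using assms by simp
  also have "\<dots> \<le> exp (-((k+1)*h*c)) * (exp (h*a) - 1)"
    using exp_ge_add_one_self[of "h*a"] by (intro mult_left_mono) (auto simp: algebra_simps)
  also have "\<dots> = exp (-((k+1)*h*c - h*a)) - exp (-((k+1)*h*c))"
    by (simp add: algebra_simps exp_add[symmetric])
  finally show ?thesis .
qed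



context frech begin

sublocale prob_space P by (rule ps)

lemma A_sets[measurable]: "{\<omega> \<in> space P. X \<omega> \<le> r * Y \<omega> \<and> Y \<omega> > u} \<in> sets P"
  using Xm Ym by measurable

lemma cc_ge: assumes "r > 0" shows "cc r \<ge> 1 / r"
proof -
  have "1 / r = integral\<^sup>L M (\<lambda>s. f s / r)" using f1 by simp
  also have "\<dots> \<le> cc r" unfolding cc_def
    by (intro integral_mono int_max1) (auto intro: fi)
  finally show ?thesis .
qed

lemma cc_pos: assumes "r > 0" shows "cc r > 0"
  using cc_ge[OF assms] assms by (smt (verit) divide_pos_pos)

lemma aa_nn: "aa r \<ge> 0"
  unfolding aa_def by (intro integral_nonneg_AE AE_I2) (auto simp: gnn indicator_def)

lemma aa_le1: "aa r \<le> 1"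
proof -
  have "aa r \<le> integral\<^sup>L M g" unfolding aa_def
    by (intro integral_mono int_ind gi) (auto simp: gnn indicator_def)
  then show ?thesis using g1 by simp
qed

lemma ind_if: "s \<in> space M \<Longrightarrow> indicator (Dset r) s * g s = (if f s \<le> r * g s then g s else 0)"
  by (auto simp: Dset_def indicator_def)

lemma V_scale: assumes "r > 0" "p > 0" shows "V (r/p) (1/p) = p * cc r"
proof -
  have "V (r/p) (1/p) \<le> p * cc r + 0 * aa 0"
    by (rule V_le) (use assms pw_eq in simp)
  moreover have "V (r/p) (1/p) \<ge> p * cc r + 0 * aa 0"
    by (rule V_ge) (use assms pw_eq in simp)
  ultimately show ?thesis by simp
qed

end


context frech begin

lemma pick_k:
  fixes z :: real and K N :: nat
  assumes "real K \<le> z" "z < real N"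
  obtains k where "k \<in> {K..<N}" "real k \<le> z" "z < real k + 1"
proof -
  define k where "k = nat \<lfloor>z\<rfloor>"
  have z0: "z \<ge> 0" using assms by linarith
  have "real k = of_int \<lfloor>z\<rfloor>" using z0 by (simp add: k_def)
  then have a: "real k \<le> z" "z < real k + 1" by linarith+
  have "K \<le> k" using assms(1) a(2) by linarith
  moreover have "k < N" using assms(2) a(1) by linarith
  ultimately show ?thesis using that a by auto
qed

lemma upper_N:
  assumes t: "t > 0" and st: "s > t" and u: "u > 0" and K1: "K \<ge> 1" and Ks: "real K * (s-t) \<ge> t"
    and NK: "N \<ge> K"
  shows "measure P {\<omega> \<in> space P. X \<omega> \<le> t * Y \<omega> \<and> Y \<omega> > u}
     \<le> real K * (1/(u*N)) * cc t + aa s / cc t * (1 - exp (- cc t / u))"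
proof -
  define h where "h = 1/(u*N)"
  have N0: "N > 0" using NK K1 by linarith
  have hpos: "h > 0" using N0 u by (simp add: h_def)
  have Nh: "real N * h = 1/u" using N0 by (simp add: h_def)
  define c where "c = cc t"
  define \<alpha> where "\<alpha> = aa s"
  have cpos: "c > 0" using cc_pos[OF t] by (simp add: c_def)
  have \<alpha>0: "\<alpha> \<ge> 0" using aa_nn by (simp add: \<alpha>_def)
  define A where "A = {\<omega> \<in> space P. X \<omega> \<le> t * Y \<omega> \<and> Y \<omega> > u}"
  define G where "G = {\<omega> \<in> space P. X \<omega> \<le> t/(real K*h) \<and> Y \<omega> \<le> 1/(real K*h)}"
  define C where "C k = {\<omega> \<in> space P. X \<omega> \<le> t/(real k*h) \<and> 1/((real k+1)*h) < Y \<omega> \<and> Y \<omega> \<le> 1/(real k*h)}" for k :: nat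
  have Gs: "G \<in> events" unfolding G_def by (rule ev_sets)
  have Cs: "C k \<in> events" for k unfolding C_def by (rule cell_sets)
  have cover: "A \<subseteq> (space P - G) \<union> (\<Union>k\<in>{K..<N}. C k)"
  proof
    fix \<omega> assume "\<omega> \<in> A"
    then have om: "\<omega> \<in> space P" "X \<omega> \<le> t * Y \<omega>" "Y \<omega> > u" by (auto simp: A_def)
    show "\<omega> \<in> (space P - G) \<union> (\<Union>k\<in>{K..<N}. C k)"
    proof (cases "\<omega> \<in> G")
      case False then show ?thesis using om by auto
    next
      case True
      then have YK: "Y \<omega> \<le> 1/(real K*h)" by (auto simp: G_def)
      have Ypos: "Y \<omega> > 0" using om u by linarith
      define z where "z = 1/(h * Y \<omega>)"
      have "real K * h * Y \<omega> \<le> 1" using YK hpos K1 by (simp add: field_simps)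
      then have zK: "real K \<le> z" using hpos Ypos by (simp add: z_def field_simps)
      have "1/(real N * h) < Y \<omega>" using om Nh u by simp
      then have "1 < real N * h * Y \<omega>" using hpos N0 by (simp add: field_simps)
      then have zN: "z < real N" using hpos Ypos by (simp add: z_def field_simps)
      obtain k where k: "k \<in> {K..<N}" "real k \<le> z" "z < real k + 1" using pick_k[OF zK zN] by blast
      have kpos: "real k > 0" using k K1 by auto
      have "real k * h * Y \<omega> \<le> 1" using k(2) hpos Ypos by (simp add: z_def field_simps)
      then have Y1: "Y \<omega> \<le> 1/(real k*h)" using kpos hpos by (simp add: field_simps)
      have "1 < (real k + 1) * h * Y \<omega>" using k(3) hpos Ypos by (simp add: z_def field_simps)
      moreover have "(real k+1)*h > 0" using kpos hpos by simp
      ultimately have Y2: "1/((real k+1)*h) < Y \<omega>" by (simp add: divide_less_eq algebra_simps)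
      have "t * Y \<omega> \<le> t * (1/(real k*h))" using Y1 t by (intro mult_left_mono) auto
      then have "X \<omega> \<le> t/(real k*h)" using om by simp
      then have "\<omega> \<in> C k" using Y1 Y2 om by (simp add: C_def)
      then show ?thesis using k by auto
    qed
  qed
  have "measure P A \<le> measure P ((space P - G) \<union> (\<Union>k\<in>{K..<N}. C k))"
    using cover Gs Cs by (intro finite_measure_mono) auto
  also have "\<dots> \<le> measure P (space P - G) + measure P (\<Union>k\<in>{K..<N}. C k)"
    using Gs Cs by (intro measure_Un_le) auto
  also have "\<dots> \<le> measure P (space P - G) + (\<Sum>k\<in>{K..<N}. measure P (C k))"
    using Cs by (intro add_left_mono measure_UNION_le) auto
  also have "measure P (space P - G) \<le> real K * h * c"
  proof -
    have "measure P (space P - G) = 1 - exp (- V (t/(real K*h)) (1/(real K*h)))"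
      using prob_compl[OF Gs] F[of "t/(real K*h)" "1/(real K*h)"] t hpos K1
      by (simp add: G_def V_def)
    also have "V (t/(real K*h)) (1/(real K*h)) = real K * h * c"
      using V_scale[of t "real K * h"] t hpos K1 by (simp add: c_def)
    also have "1 - exp (- (real K * h * c)) \<le> real K * h * c"
      using exp_ge_add_one_self[of "- (real K * h * c)"] by linarith
    finally show ?thesis .
  qed
  also have "(\<Sum>k\<in>{K..<N}. measure P (C k)) \<le>
      (\<Sum>k\<in>{K..<N}. \<alpha>/c * (exp (-((real k-1)*h*c)) - exp (-(real k*h*c))))"
  proof (rule sum_mono)
    fix k assume k: "k \<in> {K..<N}"
    have kpos: "real k \<ge> 1" using k K1 by auto
    have kK: "real k * (s - t) \<ge> t"
    proof -
      have "real K * (s-t) \<le> real k * (s-t)" using k st by (intro mult_right_mono) auto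
      then show ?thesis using Ks by linarith
    qed
    have x0: "t/(real k*h) > 0" using t kpos hpos by simp
    have y0: "0 < 1/((real k+1)*h)" using kpos hpos by simp
    have y12: "1/((real k+1)*h) \<le> 1/(real k*h)" using kpos hpos
      by (intro divide_left_mono mult_right_mono) auto
    have "measure P (C k) = exp (- V (t/(real k*h)) (1/(real k*h))) - exp (- V (t/(real k*h)) (1/((real k+1)*h)))"
      unfolding C_def by (rule cell[OF x0 y0 y12])
    also have "V (t/(real k*h)) (1/(real k*h)) = real k * h * c"
      using V_scale[of t "real k * h"] t hpos kpos by (simp add: c_def)
    also have "V (t/(real k*h)) (1/((real k+1)*h)) \<le> (real k * h) * cc t + h * aa s"
      by (rule V_le) (use pw_up[OF fnn gnn t hpos kpos kK] ind_if in simp)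
    then have "exp (- V (t/(real k*h)) (1/((real k+1)*h))) \<ge> exp (-(real k*h*c + h*\<alpha>))"
      by (simp add: c_def \<alpha>_def)
    then have "exp (- (real k*h*c)) - exp (- V (t/(real k*h)) (1/((real k+1)*h)))
        \<le> exp (- (real k*h*c)) - exp (-(real k*h*c + h*\<alpha>))" by linarith
    also have "\<dots> \<le> \<alpha>/c * (exp (-((real k-1)*h*c)) - exp (-(real k*h*c)))"
      by (rule R1[OF cpos hpos \<alpha>0])
    finally show "measure P (C k) \<le> \<alpha>/c * (exp (-((real k-1)*h*c)) - exp (-(real k*h*c)))" .
  qed
  also have "(\<Sum>k\<in>{K..<N}. \<alpha>/c * (exp (-((real k-1)*h*c)) - exp (-(real k*h*c))))
      = \<alpha>/c * (exp (-((real K-1)*h*c)) - exp (-((real N-1)*h*c)))"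
  proof -
    define fn where "fn j = - exp (-((real j - 1)*h*c))" for j :: nat
    have "(\<Sum>k\<in>{K..<N}. (exp (-((real k-1)*h*c)) - exp (-(real k*h*c)))) = (\<Sum>k=K..<N. fn (Suc k) - fn k)"
      by (simp add: fn_def)
    also have "\<dots> = fn N - fn K" by (rule sum_Suc_diff'[OF NK])
    finally have S: "(\<Sum>k\<in>{K..<N}. (exp (-((real k-1)*h*c)) - exp (-(real k*h*c)))) = exp (-((real K-1)*h*c)) - exp (-((real N-1)*h*c))"
      by (simp add: fn_def)
    show ?thesis by (simp only: sum_distrib_left[symmetric] S)
  qed
  also have "\<alpha>/c * (exp (-((real K-1)*h*c)) - exp (-((real N-1)*h*c))) \<le> \<alpha>/c * (1 - exp (- c / u))"
  proof -
    have e1: "exp (-((real K-1)*h*c)) \<le> 1" using K1 hpos cpos by simp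
    have e2: "exp (- c / u) \<le> exp (-((real N-1)*h*c))"
    proof -
      have "c / u = real N * h * c" using Nh by simp
      then have "-((real N-1)*h*c) \<ge> - c/u" using hpos cpos by (simp add: algebra_simps)
      then show ?thesis by simp
    qed
    have "exp (-((real K-1)*h*c)) - exp (-((real N-1)*h*c)) \<le> 1 - exp (- c / u)" using e1 e2 by linarith
    then show ?thesis using \<alpha>0 cpos by (intro mult_left_mono) auto
  qed
  finally show ?thesis by (simp add: A_def h_def c_def \<alpha>_def algebra_simps)
qed

end


context frech begin

lemma lower_N:
  assumes t: "t > 0" and st: "s > t" and u: "u > 0" and K1: "K \<ge> 1" and Ks: "real K * (s-t) \<ge> t"
    and NK: "N \<ge> K"
  shows "measure P {\<omega> \<in> space P. X \<omega> \<le> s * Y \<omega> \<and> Y \<omega> > u}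
     \<ge> aa t / cc s * (1 - exp (- cc s / u)) - aa t * (real K + 1) * (1/(u*N))"
proof -
  define h where "h = 1/(u*N)"
  have N0: "N > 0" using NK K1 by linarith
  have hpos: "h > 0" using N0 u by (simp add: h_def)
  have Nh: "real N * h = 1/u" using N0 by (simp add: h_def)
  have s0: "s > 0" using t st by linarith
  define c where "c = cc s"
  define a where "a = aa t"
  have cpos: "c > 0" using cc_pos[OF s0] by (simp add: c_def)
  have a0: "a \<ge> 0" using aa_nn by (simp add: a_def)
  define A where "A = {\<omega> \<in> space P. X \<omega> \<le> s * Y \<omega> \<and> Y \<omega> > u}"
  define L where "L k = {\<omega> \<in> space P. X \<omega> \<le> s/((real k+1)*h) \<and> 1/((real k+1)*h) < Y \<omega> \<and> Y \<omega> \<le> 1/(real k*h)}" for k :: nat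
  have Ls: "L k \<in> events" for k unfolding L_def by (rule cell_sets)
  have As: "A \<in> events" unfolding A_def by (rule A_sets)
  have disj1: "L m \<inter> L n = {}" if "m < n" for m n
  proof -
    have "1/(real n*h) \<le> 1/((real m+1)*h)" using that hpos
      by (intro divide_left_mono mult_right_mono) auto
    then show ?thesis unfolding L_def by auto
  qed
  have disj: "disjoint_family_on L {K..<N}"
    unfolding disjoint_family_on_def
  proof (intro ballI impI)
    fix m n assume "m \<in> {K..<N}" "n \<in> {K..<N}" "m \<noteq> n"
    then show "L m \<inter> L n = {}" using disj1[of m n] disj1[of n m] by (cases "m < n") auto
  qed
  have sub: "(\<Union>k\<in>{K..<N}. L k) \<subseteq> A"
  proof
    fix \<omega> assume "\<omega> \<in> (\<Union>k\<in>{K..<N}. L k)"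
    then obtain k where k: "k \<in> {K..<N}" "\<omega> \<in> L k" by auto
    have kp: "(real k + 1) * h > 0" using hpos by simp
    have om: "\<omega> \<in> space P" "X \<omega> \<le> s/((real k+1)*h)" "1/((real k+1)*h) < Y \<omega>"
      using k(2) by (auto simp: L_def)
    have "s/((real k+1)*h) = s * (1/((real k+1)*h))" by simp
    also have "\<dots> \<le> s * Y \<omega>" using om(3) s0 by (intro mult_left_mono) auto
    finally have X1: "X \<omega> \<le> s * Y \<omega>" using om(2) by linarith
    have "u = 1/(real N * h)" using Nh u by simp
    also have "\<dots> \<le> 1/((real k+1)*h)" using k hpos
      by (intro divide_left_mono mult_right_mono) auto
    finally have "u < Y \<omega>" using om(3) by linarith
    then show "\<omega> \<in> A" using X1 om by (simp add: A_def)
  qed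
  have "(\<Sum>k\<in>{K..<N}. a/c * (exp (-((real k+1)*h*c)) - exp (-((real k+2)*h*c))))
      \<le> (\<Sum>k\<in>{K..<N}. measure P (L k))"
  proof (rule sum_mono)
    fix k assume k: "k \<in> {K..<N}"
    have kpos: "real k \<ge> 1" using k K1 by auto
    have kK: "real k * (s - t) \<ge> t"
    proof -
      have "real K * (s-t) \<le> real k * (s-t)" using k st by (intro mult_right_mono) auto
      then show ?thesis using Ks by linarith
    qed
    have x0: "s/((real k+1)*h) > 0" using s0 kpos hpos by simp
    have y0: "0 < 1/((real k+1)*h)" using kpos hpos by simp
    have y12: "1/((real k+1)*h) \<le> 1/(real k*h)" using kpos hpos
      by (intro divide_left_mono mult_right_mono) auto
    have "measure P (L k) = exp (- V (s/((real k+1)*h)) (1/(real k*h))) - exp (- V (s/((real k+1)*h)) (1/((real k+1)*h)))"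
      unfolding L_def by (rule cell[OF x0 y0 y12])
    also have "V (s/((real k+1)*h)) (1/((real k+1)*h)) = (real k+1) * h * c"
      using V_scale[of s "(real k+1) * h"] s0 hpos kpos by (simp add: c_def)
    finally have meq: "measure P (L k) = exp (- V (s/((real k+1)*h)) (1/(real k*h))) - exp (- ((real k+1) * h * c))" .
    have "V (s/((real k+1)*h)) (1/(real k*h)) \<le> ((real k+1) * h) * cc s + (-h) * aa t"
      by (rule V_le) (use pw_lo[OF fnn gnn t hpos kpos kK st] ind_if in simp)
    then have "exp (- V (s/((real k+1)*h)) (1/(real k*h))) \<ge> exp (-((real k+1)*h*c - h*a))"
      by (simp add: c_def a_def)
    then have "exp (- V (s/((real k+1)*h)) (1/(real k*h))) - exp (- ((real k+1) * h * c))
        \<ge> exp (-((real k+1)*h*c - h*a)) - exp (- ((real k+1) * h * c))" by linarith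
    moreover have "exp (-((real k+1)*h*c - h*a)) - exp (- ((real k+1) * h * c)) \<ge>
        a/c * (exp (-((real k+1)*h*c)) - exp (-((real k+2)*h*c)))"
      by (rule R2[OF cpos hpos a0])
    ultimately show "a/c * (exp (-((real k+1)*h*c)) - exp (-((real k+2)*h*c))) \<le> measure P (L k)"
      unfolding meq by linarith
  qed
  also have "(\<Sum>k\<in>{K..<N}. measure P (L k)) = measure P (\<Union>k\<in>{K..<N}. L k)"
    using Ls disj by (intro finite_measure_finite_Union[symmetric]) auto
  also have "\<dots> \<le> measure P A" using sub As by (intro finite_measure_mono) auto
  finally have S1: "(\<Sum>k\<in>{K..<N}. a/c * (exp (-((real k+1)*h*c)) - exp (-((real k+2)*h*c)))) \<le> measure P A" .
  have "(\<Sum>k\<in>{K..<N}. (exp (-((real k+1)*h*c)) - exp (-((real k+2)*h*c))))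
      = exp (-((real K+1)*h*c)) - exp (-((real N+1)*h*c))"
  proof -
    define fn where "fn j = - exp (-((real j + 1)*h*c))" for j :: nat
    have "(\<Sum>k\<in>{K..<N}. (exp (-((real k+1)*h*c)) - exp (-((real k+2)*h*c)))) = (\<Sum>k=K..<N. fn (Suc k) - fn k)"
      by (simp add: fn_def algebra_simps)
    also have "\<dots> = fn N - fn K" by (rule sum_Suc_diff'[OF NK])
    finally show ?thesis by (simp add: fn_def)
  qed
  then have S2: "(\<Sum>k\<in>{K..<N}. a/c * (exp (-((real k+1)*h*c)) - exp (-((real k+2)*h*c))))
      = a/c * (exp (-((real K+1)*h*c)) - exp (-((real N+1)*h*c)))"
    by (simp only: sum_distrib_left[symmetric])
  have e1: "exp (-((real K+1)*h*c)) \<ge> 1 - (real K+1)*h*c"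
    using exp_ge_add_one_self[of "-((real K+1)*h*c)"] by linarith
  have e2: "exp (-((real N+1)*h*c)) \<le> exp (- c / u)"
  proof -
    have "c / u = real N * h * c" using Nh by simp
    then have "-((real N+1)*h*c) \<le> - c/u" using hpos cpos by (simp add: algebra_simps)
    then show ?thesis by simp
  qed
  have "a/c * (1 - exp (- c / u)) - a * (real K + 1) * h = a/c * (1 - (real K+1)*h*c - exp (- c / u))"
    using cpos by (simp add: field_simps)
  also have "\<dots> \<le> a/c * (exp (-((real K+1)*h*c)) - exp (-((real N+1)*h*c)))"
  proof -
    have "1 - (real K+1)*h*c - exp (- c / u) \<le> exp (-((real K+1)*h*c)) - exp (-((real N+1)*h*c))"
      using e1 e2 by linarith
    then show ?thesis using a0 cpos by (intro mult_left_mono) auto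
  qed
  finally show ?thesis using S1 S2 by (simp add: A_def h_def c_def a_def)
qed

end


lemma exN:
  fixes C u e :: real and K :: nat
  assumes "u > 0" "e > 0" "C \<ge> 0"
  shows "\<exists>N\<ge>K. C * (1/(u*real N)) \<le> e"
proof -
  define N where "N = max K (nat \<lceil>C/(u*e)\<rceil> + 1)"
  have N1: "real N \<ge> C/(u*e) + 0" unfolding N_def by linarith
  have Npos: "real N > 0" unfolding N_def by simp
  have "C \<le> e * (u * real N)" using N1 assms by (simp add: field_simps)
  then have "C * (1/(u*real N)) \<le> e" using assms Npos by (simp add: field_simps)
  moreover have "N \<ge> K" by (simp add: N_def)
  ultimately show ?thesis by blast
qed

lemma exK:
  fixes s t :: real
  assumes "s > t" "t > 0"
  obtains K :: nat where "K \<ge> 1" "real K * (s-t) \<ge> t"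
proof -
  define K where "K = nat \<lceil>t/(s-t)\<rceil> + 1"
  have "real K \<ge> t/(s-t)" unfolding K_def by linarith
  then have "real K * (s-t) \<ge> t" using assms by (simp add: field_simps)
  moreover have "K \<ge> 1" by (simp add: K_def)
  ultimately show ?thesis using that by blast
qed

context frech begin

lemma upper_s:
  assumes t: "t > 0" and st: "s > t" and u: "u > 0"
  shows "measure P {\<omega> \<in> space P. X \<omega> \<le> t * Y \<omega> \<and> Y \<omega> > u} \<le> aa s / cc t * (1 - exp (- cc t / u))"
proof -
  obtain K where K: "K \<ge> 1" "real K * (s-t) \<ge> t" using exK[OF st t] by blast
  show ?thesis
  proof (rule field_le_epsilon)
    fix e :: real assume e: "e > 0"
    have C0: "real K * cc t \<ge> 0" using cc_pos[OF t] by simp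
    obtain N where N: "N \<ge> K" "real K * cc t * (1/(u*real N)) \<le> e" using exN[OF u e C0, of K] by blast
    have "measure P {\<omega> \<in> space P. X \<omega> \<le> t * Y \<omega> \<and> Y \<omega> > u}
     \<le> real K * (1/(u*N)) * cc t + aa s / cc t * (1 - exp (- cc t / u))"
      by (rule upper_N[OF t st u K N(1)])
    then show "measure P {\<omega> \<in> space P. X \<omega> \<le> t * Y \<omega> \<and> Y \<omega> > u} \<le> aa s / cc t * (1 - exp (- cc t / u)) + e"
      using N(2) by (simp add: algebra_simps)
  qed
qed

lemma lower_s:
  assumes t: "t > 0" and st: "s > t" and u: "u > 0"
  shows "measure P {\<omega> \<in> space P. X \<omega> \<le> s * Y \<omega> \<and> Y \<omega> > u} \<ge> aa t / cc s * (1 - exp (- cc s / u))"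
proof -
  obtain K where K: "K \<ge> 1" "real K * (s-t) \<ge> t" using exK[OF st t] by blast
  show ?thesis
  proof (rule field_le_epsilon)
    fix e :: real assume e: "e > 0"
    have C0: "aa t * (real K + 1) \<ge> 0" using aa_nn by simp
    obtain N where N: "N \<ge> K" "aa t * (real K + 1) * (1/(u*real N)) \<le> e" using exN[OF u e C0, of K] by blast
    have "measure P {\<omega> \<in> space P. X \<omega> \<le> s * Y \<omega> \<and> Y \<omega> > u}
     \<ge> aa t / cc s * (1 - exp (- cc s / u)) - aa t * (real K + 1) * (1/(u*N))"
      by (rule lower_N[OF t st u K N(1)])
    then show "aa t / cc s * (1 - exp (- cc s / u)) \<le> measure P {\<omega> \<in> space P. X \<omega> \<le> s * Y \<omega> \<and> Y \<omega> > u} + e"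
      using N(2) by (simp add: algebra_simps)
  qed
qed

definition sq :: "real \<Rightarrow> nat \<Rightarrow> real" where "sq t n = t + inverse (real (Suc n))"

lemma sq_lim: "sq t \<longlonglongrightarrow> t"
  unfolding sq_def using tendsto_add[OF tendsto_const LIMSEQ_inverse_real_of_nat, of t] by simp

lemma sq_gt: "sq t n > t" by (simp add: sq_def)

lemma aa_lim: assumes t: "t > 0" shows "(\<lambda>n. aa (sq t n)) \<longlonglongrightarrow> aa t"
  unfolding aa_def
proof (rule integral_dominated_convergence[where w = g])
  show "(\<lambda>s. indicator (Dset t) s * g s) \<in> borel_measurable M"
    using int_ind by (rule borel_measurable_integrable)
  show "(\<lambda>s. indicator (Dset (sq t i)) s * g s) \<in> borel_measurable M" for i
    using int_ind by (rule borel_measurable_integrable)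
  show "integrable M g" by (rule gi)
  show "AE x in M. norm (indicator (Dset (sq t i)) x * g x) \<le> g x" for i
    by (intro AE_I2) (auto simp: gnn indicator_def)
  show "AE x in M. (\<lambda>i. indicator (Dset (sq t i)) x * g x) \<longlonglongrightarrow> indicator (Dset t) x * g x"
  proof (intro AE_I2 tendsto_eventually)
    fix x assume x: "x \<in> space M"
    show "\<forall>\<^sub>F i in sequentially. indicator (Dset (sq t i)) x * g x = indicator (Dset t) x * g x"
    proof (cases "f x \<le> t * g x")
      case True
      have "f x \<le> sq t i * g x" for i
      proof -
        have "t * g x \<le> sq t i * g x" using sq_gt[of t i] gnn[OF x] by (intro mult_right_mono) auto
        then show ?thesis using True by linarith
      qed
      then show ?thesis using True x by (intro always_eventually) (auto simp: Dset_def)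
    next
      case False
      show ?thesis
      proof (cases "g x = 0")
        case True then show ?thesis by simp
      next
        case g0: False
        have "(\<lambda>i. sq t i * g x) \<longlonglongrightarrow> t * g x" by (intro tendsto_intros sq_lim)
        then have "\<forall>\<^sub>F i in sequentially. sq t i * g x < f x" using False by (intro order_tendstoD) auto
        then show ?thesis by eventually_elim (use False in \<open>auto simp: Dset_def\<close>)
      qed
    qed
  qed
qed

lemma cc_lim: assumes t: "t > 0" shows "(\<lambda>n. cc (sq t n)) \<longlonglongrightarrow> cc t"
  unfolding cc_def
proof (rule integral_dominated_convergence[where w = "\<lambda>s. f s / t + g s"])
  show "(\<lambda>s. max (f s / t) (g s)) \<in> borel_measurable M"
    using int_max1 by (rule borel_measurable_integrable)
  show "(\<lambda>s. max (f s / sq t i) (g s)) \<in> borel_measurable M" for i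
    using int_max1 by (rule borel_measurable_integrable)
  show "integrable M (\<lambda>s. f s / t + g s)" by (intro Bochner_Integration.integrable_add integrable_divide fi gi)
  show "AE x in M. norm (max (f x / sq t i) (g x)) \<le> f x / t + g x" for i
  proof (intro AE_I2)
    fix x assume x: "x \<in> space M"
    have "f x / sq t i \<le> f x / t" using fnn[OF x] t sq_gt[of t i] by (intro divide_left_mono) auto
    moreover have "f x / sq t i \<ge> 0" using fnn[OF x] t sq_gt[of t i] by simp
    moreover have "f x / t \<ge> 0" using fnn[OF x] t by simp
    ultimately show "norm (max (f x / sq t i) (g x)) \<le> f x / t + g x" using gnn[OF x] by auto
  qed
  show "AE x in M. (\<lambda>i. max (f x / sq t i) (g x)) \<longlonglongrightarrow> max (f x / t) (g x)"
    using t by (intro AE_I2 tendsto_intros sq_lim) auto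
qed

lemma meas_lim: assumes t: "t > 0" and u: "u \<ge> 0"
  shows "(\<lambda>n. measure P {\<omega> \<in> space P. X \<omega> \<le> sq t n * Y \<omega> \<and> Y \<omega> > u})
     \<longlonglongrightarrow> measure P {\<omega> \<in> space P. X \<omega> \<le> t * Y \<omega> \<and> Y \<omega> > u}"
proof -
  define B where "B n = {\<omega> \<in> space P. X \<omega> \<le> sq t n * Y \<omega> \<and> Y \<omega> > u}" for n
  have "(\<lambda>n. measure P (B n)) \<longlonglongrightarrow> measure P (\<Inter> (range B))"
  proof (rule finite_Lim_measure_decseq)
    show "range B \<subseteq> events" unfolding B_def by auto
    show "antimono_on UNIV B"
    proof (rule decseq_SucI)
      fix n
      have "sq t (Suc n) \<le> sq t n" by (simp add: sq_def field_simps)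
      then show "B (Suc n) \<subseteq> B n" unfolding B_def using u
        by (auto intro: order_trans mult_right_mono)
    qed
  qed
  also have "\<Inter> (range B) = {\<omega> \<in> space P. X \<omega> \<le> t * Y \<omega> \<and> Y \<omega> > u}"
  proof
    show "{\<omega> \<in> space P. X \<omega> \<le> t * Y \<omega> \<and> Y \<omega> > u} \<subseteq> \<Inter> (range B)"
    proof (clarsimp simp: B_def)
      fix \<omega> n assume "X \<omega> \<le> t * Y \<omega>" "u < Y \<omega>"
      moreover have "t * Y \<omega> \<le> sq t n * Y \<omega>" using sq_gt[of t n] \<open>u < Y \<omega>\<close> u by (intro mult_right_mono) auto
      ultimately show "X \<omega> \<le> sq t n * Y \<omega>" by linarith
    qed
    show "\<Inter> (range B) \<subseteq> {\<omega> \<in> space P. X \<omega> \<le> t * Y \<omega> \<and> Y \<omega> > u}"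
    proof
      fix \<omega> assume "\<omega> \<in> \<Inter> (range B)"
      then have om: "\<omega> \<in> space P" "Y \<omega> > u" "\<And>n. X \<omega> \<le> sq t n * Y \<omega>" by (auto simp: B_def)
      have "(\<lambda>n. sq t n * Y \<omega>) \<longlonglongrightarrow> t * Y \<omega>" by (intro tendsto_intros sq_lim)
      then have "X \<omega> \<le> t * Y \<omega>" using om(3) by (intro LIMSEQ_le_const) auto
      then show "\<omega> \<in> {\<omega> \<in> space P. X \<omega> \<le> t * Y \<omega> \<and> Y \<omega> > u}" using om by auto
    qed
  qed
  finally show ?thesis by (simp add: B_def)
qed

lemma main_pos:
  assumes t: "t > 0" and u: "u > 0"
  shows "measure P {\<omega> \<in> space P. X \<omega> \<le> t * Y \<omega> \<and> Y \<omega> > u} = aa t / cc t * (1 - exp (- cc t / u))"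
proof (rule antisym)
  have c0: "cc t \<noteq> 0" using cc_pos[OF t] by simp
  show "measure P {\<omega> \<in> space P. X \<omega> \<le> t * Y \<omega> \<and> Y \<omega> > u} \<le> aa t / cc t * (1 - exp (- cc t / u))"
  proof (rule LIMSEQ_le[OF tendsto_const])
    show "(\<lambda>n. aa (sq t n) / cc t * (1 - exp (- cc t / u))) \<longlonglongrightarrow> aa t / cc t * (1 - exp (- cc t / u))"
      using c0 by (intro tendsto_intros aa_lim[OF t])
    show "\<exists>N. \<forall>n\<ge>N. measure P {\<omega> \<in> space P. X \<omega> \<le> t * Y \<omega> \<and> Y \<omega> > u} \<le> aa (sq t n) / cc t * (1 - exp (- cc t / u))"
      using upper_s[OF t sq_gt u] by blast
  qed
  show "aa t / cc t * (1 - exp (- cc t / u)) \<le> measure P {\<omega> \<in> space P. X \<omega> \<le> t * Y \<omega> \<and> Y \<omega> > u}"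
  proof (rule LIMSEQ_le[OF _ meas_lim[OF t]])
    show "(\<lambda>n. aa t / cc (sq t n) * (1 - exp (- cc (sq t n) / u))) \<longlonglongrightarrow> aa t / cc t * (1 - exp (- cc t / u))"
      using c0 u by (intro tendsto_intros cc_lim[OF t]) auto
    show "\<exists>N. \<forall>n\<ge>N. aa t / cc (sq t n) * (1 - exp (- cc (sq t n) / u)) \<le> measure P {\<omega> \<in> space P. X \<omega> \<le> sq t n * Y \<omega> \<and> Y \<omega> > u}"
      using lower_s[OF t sq_gt u] by blast
  qed (use u in simp)
qed

end


context frech begin

lemma exp_lim0: assumes "c > 0" shows "(\<lambda>n. exp (- c / inverse (real (Suc n)))) \<longlonglongrightarrow> 0"
proof (rule Lim_null_comparison)
  show "\<forall>\<^sub>F n in sequentially. norm (exp (- c / inverse (real (Suc n)))) \<le> inverse c * inverse (real (Suc n))"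
  proof (intro always_eventually allI)
    fix n
    have p: "c * real (Suc n) > 0" using assms by simp
    have "exp (c * real (Suc n)) \<ge> c * real (Suc n)"
      using exp_ge_add_one_self[of "c * real (Suc n)"] by linarith
    then have "inverse (exp (c * real (Suc n))) \<le> inverse (c * real (Suc n))"
      using p by (intro le_imp_inverse_le) auto
    then show "norm (exp (- c / inverse (real (Suc n)))) \<le> inverse c * inverse (real (Suc n))"
      by (simp add: exp_minus divide_inverse mult.commute)
  qed
  show "(\<lambda>n. inverse c * inverse (real (Suc n))) \<longlonglongrightarrow> 0"
    using tendsto_mult[OF tendsto_const LIMSEQ_inverse_real_of_nat, of "inverse c"] by simp
qed

lemma main_zero:
  assumes t: "t > 0"
  shows "measure P {\<omega> \<in> space P. X \<omega> \<le> t * Y \<omega> \<and> Y \<omega> > 0} = aa t / cc t"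
proof -
  define B where "B n = {\<omega> \<in> space P. X \<omega> \<le> t * Y \<omega> \<and> Y \<omega> > inverse (real (Suc n))}" for n
  have "(\<lambda>n. measure P (B n)) \<longlonglongrightarrow> measure P (\<Union> (range B))"
  proof (rule finite_Lim_measure_incseq)
    show "range B \<subseteq> events" unfolding B_def by auto
    show "incseq B"
    proof (rule incseq_SucI)
      fix n
      have i: "inverse (real (Suc (Suc n))) \<le> inverse (real (Suc n))" by (rule le_imp_inverse_le) auto
      have "\<And>y. inverse (real (Suc n)) < y \<Longrightarrow> inverse (real (Suc (Suc n))) < y" using i by linarith
      then show "B n \<subseteq> B (Suc n)" unfolding B_def by (intro Collect_mono) auto
    qed
  qed
  also have "\<Union> (range B) = {\<omega> \<in> space P. X \<omega> \<le> t * Y \<omega> \<and> Y \<omega> > 0}"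
  proof
    show "\<Union> (range B) \<subseteq> {\<omega> \<in> space P. X \<omega> \<le> t * Y \<omega> \<and> Y \<omega> > 0}"
    proof
      fix \<omega> assume "\<omega> \<in> \<Union> (range B)"
      then obtain n where "\<omega> \<in> B n" by auto
      then have om: "\<omega> \<in> space P" "X \<omega> \<le> t * Y \<omega>" "inverse (real (Suc n)) < Y \<omega>" unfolding B_def by blast+
      have "inverse (real (Suc n)) > 0" by simp
      then have "Y \<omega> > 0" using om(3) by linarith
      then show "\<omega> \<in> {\<omega> \<in> space P. X \<omega> \<le> t * Y \<omega> \<and> Y \<omega> > 0}" using om by auto
    qed
    show "{\<omega> \<in> space P. X \<omega> \<le> t * Y \<omega> \<and> Y \<omega> > 0} \<subseteq> \<Union> (range B)"
    proof
      fix \<omega> assume "\<omega> \<in> {\<omega> \<in> space P. X \<omega> \<le> t * Y \<omega> \<and> Y \<omega> > 0}"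
      then have om: "\<omega> \<in> space P" "X \<omega> \<le> t * Y \<omega>" "Y \<omega> > 0" by auto
      obtain n where "inverse (real (Suc n)) < Y \<omega>" using reals_Archimedean[OF om(3)] by auto
      then show "\<omega> \<in> \<Union> (range B)" using om by (auto simp: B_def)
    qed
  qed
  finally have L1: "(\<lambda>n. measure P (B n)) \<longlonglongrightarrow> measure P {\<omega> \<in> space P. X \<omega> \<le> t * Y \<omega> \<and> Y \<omega> > 0}" .
  have "measure P (B n) = aa t / cc t * (1 - exp (- cc t / inverse (real (Suc n))))" for n
    unfolding B_def by (rule main_pos[OF t]) simp
  moreover have "(\<lambda>n. aa t / cc t * (1 - exp (- cc t / inverse (real (Suc n))))) \<longlonglongrightarrow> aa t / cc t * (1 - 0)"
    by (intro tendsto_intros exp_lim0 cc_pos t)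
  ultimately have L2: "(\<lambda>n. measure P (B n)) \<longlonglongrightarrow> aa t / cc t" by simp
  show ?thesis using LIMSEQ_unique[OF L1 L2] .
qed

lemma zero_t:
  assumes u: "u \<ge> 0"
  shows "measure P {\<omega> \<in> space P. X \<omega> / Y \<omega> \<le> 0 \<and> Y \<omega> > u} = 0"
proof -
  have "measure P {\<omega> \<in> space P. X \<omega> / Y \<omega> \<le> 0 \<and> Y \<omega> > u} \<le> 0"
  proof (rule field_le_epsilon)
    fix e :: real assume e: "e > 0"
    have "{\<omega> \<in> space P. X \<omega> / Y \<omega> \<le> 0 \<and> Y \<omega> > u} \<subseteq> {\<omega> \<in> space P. X \<omega> \<le> e * Y \<omega> \<and> Y \<omega> > 0}"
    proof clarify
      fix \<omega> assume "\<omega> \<in> space P" "X \<omega> / Y \<omega> \<le> 0" "u < Y \<omega>"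
      then have Yp: "Y \<omega> > 0" using u by linarith
      then have "X \<omega> \<le> 0" using \<open>X \<omega> / Y \<omega> \<le> 0\<close> by (simp add: divide_le_0_iff)
      moreover have "e * Y \<omega> \<ge> 0" using e Yp by simp
      ultimately show "X \<omega> \<le> e * Y \<omega> \<and> 0 < Y \<omega>" using Yp by linarith
    qed
    then have "measure P {\<omega> \<in> space P. X \<omega> / Y \<omega> \<le> 0 \<and> Y \<omega> > u} \<le> measure P {\<omega> \<in> space P. X \<omega> \<le> e * Y \<omega> \<and> Y \<omega> > 0}"
      by (intro finite_measure_mono) auto
    also have "\<dots> = aa e / cc e" by (rule main_zero[OF e])
    also have "\<dots> \<le> 1 / cc e" using aa_le1 cc_pos[OF e] by (intro divide_right_mono) auto
    also have "\<dots> \<le> e"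
    proof -
      have "cc e \<ge> 1 / e" by (rule cc_ge[OF e])
      then have "1 \<le> e * cc e" using e by (simp add: field_simps)
      then show ?thesis using cc_pos[OF e] by (simp add: field_simps)
    qed
    finally show "measure P {\<omega> \<in> space P. X \<omega> / Y \<omega> \<le> 0 \<and> Y \<omega> > u} \<le> 0 + e" by simp
  qed
  then show ?thesis using measure_nonneg[of P] by (meson antisym)
qed

end


lemma (in frech) ev_eq: assumes "u \<ge> 0"
  shows "{\<omega> \<in> space P. X \<omega> / Y \<omega> \<le> t \<and> Y \<omega> > u} = {\<omega> \<in> space P. X \<omega> \<le> t * Y \<omega> \<and> Y \<omega> > u}"
proof -
  have "X \<omega> / Y \<omega> \<le> t \<longleftrightarrow> X \<omega> \<le> t * Y \<omega>" if "Y \<omega> > u" for \<omega>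
    using that assms by (simp add: pos_divide_le_eq mult.commute)
  then show ?thesis by blast
qed

theorem proposition1:
  fixes M :: "'s measure" and P :: "'w measure"
    and f g :: "'s \<Rightarrow> real" and X Y :: "'w \<Rightarrow> real" and t u :: real
  assumes "sigma_finite_measure M"
    and "f \<in> borel_measurable M" and "g \<in> borel_measurable M"
    and "\<And>s. s \<in> space M \<Longrightarrow> f s \<ge> 0" and "\<And>s. s \<in> space M \<Longrightarrow> g s \<ge> 0"
    and "integrable M f" and "integrable M g"
    and "integral\<^sup>L M f = 1" and "integral\<^sup>L M g = 1"
    and "prob_space P"
    and "X \<in> borel_measurable P" and "Y \<in> borel_measurable P"
    and "\<And>x y. x > 0 \<Longrightarrow> y > 0 \<Longrightarrow>
           measure P {\<omega> \<in> space P. X \<omega> \<le> x \<and> Y \<omega> \<le> y}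
             = exp (- (integral\<^sup>L M (\<lambda>s. max (f s / x) (g s / y))))"
    and "t \<ge> 0" and "u \<ge> 0"
  defines "D \<equiv> {s \<in> space M. f s \<le> t * g s}"
  defines "E \<equiv> space M - D"
  shows "measure P {\<omega> \<in> space P. X \<omega> / Y \<omega> \<le> t \<and> Y \<omega> > u}
           = ratio_rhs (set_lebesgue_integral M D (\<lambda>s. \<bar>g s\<bar>))
                       (set_lebesgue_integral M E (\<lambda>s. \<bar>f s\<bar>)) t u
         \<and> (emeasure M E = 0 \<longrightarrow> measure P {\<omega> \<in> space P. X \<omega> / Y \<omega> > t} = 0)"
proof -
  interpret fr: frech M P f g X Y
    by (rule frech.intro) (fact assms(2-13))+
  note t = \<open>t \<ge> 0\<close> and u = \<open>u \<ge> 0\<close>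
  define a where "a = set_lebesgue_integral M D (\<lambda>s. \<bar>g s\<bar>)"
  define b where "b = set_lebesgue_integral M E (\<lambda>s. \<bar>f s\<bar>)"
  have DD: "D = fr.Dset t" by (simp add: D_def fr.Dset_def)
  have Es: "E \<in> sets M" unfolding E_def DD by auto
  have a_eq: "a = fr.aa t"
    unfolding a_def fr.aa_def set_lebesgue_integral_def DD
    by (intro Bochner_Integration.integral_cong) (auto simp: fr.gnn)
  have bI: "integrable M (\<lambda>s. indicator E s * \<bar>f s\<bar>)"
    using integrable_real_mult_indicator[OF Es integrable_abs[OF fr.fi]] by (simp add: mult.commute)
  have b_eq: "b = integral\<^sup>L M (\<lambda>s. indicator E s * \<bar>f s\<bar>)"
    unfolding b_def set_lebesgue_integral_def by simp
  have cc_eq: "fr.cc t = a + b / t" if tp: "t > 0"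
  proof -
    have "fr.cc t = integral\<^sup>L M (\<lambda>s. indicator (fr.Dset t) s * g s + indicator E s * \<bar>f s\<bar> / t)"
      unfolding fr.cc_def
    proof (intro Bochner_Integration.integral_cong refl)
      fix s assume s: "s \<in> space M"
      show "max (f s / t) (g s) = indicator (fr.Dset t) s * g s + indicator E s * \<bar>f s\<bar> / t"
      proof (cases "f s \<le> t * g s")
        case True
        then have "f s / t \<le> g s" using tp by (simp add: pos_divide_le_eq mult.commute)
        then show ?thesis using True s by (auto simp: E_def DD fr.Dset_def indicator_def)
      next
        case False
        then have "f s / t > g s" using tp by (simp add: pos_less_divide_eq mult.commute)
        then show ?thesis using False s fr.fnn[OF s] by (auto simp: E_def DD fr.Dset_def indicator_def)
      qed
    qed
    also have "\<dots> = fr.aa t + b / t"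
      unfolding fr.aa_def b_eq
      by (subst Bochner_Integration.integral_add) (auto intro: fr.int_ind integrable_divide bI)
    finally show ?thesis using a_eq by simp
  qed
  have part1: "measure P {\<omega> \<in> space P. X \<omega> / Y \<omega> \<le> t \<and> Y \<omega> > u} = ratio_rhs a b t u"
  proof (cases "t = 0")
    case True
    then show ?thesis using fr.zero_t[OF u] by (simp add: ratio_rhs_def)
  next
    case False
    then have tp: "t > 0" using t by simp
    have c: "fr.cc t = a + b / t" by (rule cc_eq[OF tp])
    have cpos: "fr.cc t > 0" by (rule fr.cc_pos[OF tp])
    have rat: "fr.aa t / fr.cc t = t * a / (t * a + b)"
    proof -
      have "t * a + b = t * fr.cc t" using c tp by (simp add: field_simps)
      then show ?thesis using a_eq tp cpos by (simp add: field_simps)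
    qed
    show ?thesis
    proof (cases "u = 0")
      case True
      then show ?thesis using fr.main_zero[OF tp] fr.ev_eq[OF u, of t] rat tp
        by (simp add: ratio_rhs_def)
    next
      case False
      then have up: "u > 0" using u by simp
      have "measure P {\<omega> \<in> space P. X \<omega> / Y \<omega> \<le> t \<and> Y \<omega> > u} = fr.aa t / fr.cc t * (1 - exp (- fr.cc t / u))"
        using fr.main_pos[OF tp up] fr.ev_eq[OF u, of t] by simp
      also have "\<dots> = t*a/(t*a+b) * (1 - exp (- (a + b/t) / u))" by (subst rat, subst c, rule refl)
      also have "\<dots> = ratio_rhs a b t u" using tp up by (simp add: ratio_rhs_def)
      finally show ?thesis .
    qed
  qed
  have part2: "measure P {\<omega> \<in> space P. X \<omega> / Y \<omega> > t} = 0" if E0: "emeasure M E = 0"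
  proof -
    have b0: "b = 0" unfolding b_eq
    proof (rule integral_eq_zero_AE)
      have "AE s in M. s \<notin> E" by (rule AE_not_in) (use E0 Es null_setsI in blast)
      then show "AE s in M. indicator E s * \<bar>f s\<bar> = 0" by eventually_elim auto
    qed
    have tp: "t > 0"
    proof (rule ccontr)
      assume "\<not> t > 0"
      then have t0: "t = 0" using t by simp
      have "integral\<^sup>L M f = b" unfolding b_eq
        by (intro Bochner_Integration.integral_cong refl)
           (use fr.fnn t0 in \<open>force simp: E_def D_def indicator_def\<close>)
      then show False using b0 fr.f1 by simp
    qed
    have c: "fr.cc t = a" using cc_eq[OF tp] b0 by simp
    have "t * fr.cc t \<ge> 1" using fr.cc_ge[OF tp] tp by (simp add: field_simps)
    then have ta: "t * a > 0" using c by simp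
    have "measure P {\<omega> \<in> space P. X \<omega> / Y \<omega> \<le> t \<and> Y \<omega> > 0} = ratio_rhs a b t 0"
      using fr.main_zero[OF tp] fr.ev_eq[of 0 t] cc_eq[OF tp] a_eq tp b0 c ta
      by (simp add: ratio_rhs_def)
    also have "\<dots> = 1" using ta b0 by (auto simp: ratio_rhs_def)
    finally have m1: "measure P {\<omega> \<in> space P. X \<omega> / Y \<omega> \<le> t \<and> Y \<omega> > 0} = 1" .
    have Ss: "{\<omega> \<in> space P. X \<omega> / Y \<omega> \<le> t \<and> Y \<omega> > 0} \<in> fr.events"
      using fr.Xm fr.Ym by measurable
    have "measure P {\<omega> \<in> space P. X \<omega> / Y \<omega> > t} \<le> measure P (space P - {\<omega> \<in> space P. X \<omega> / Y \<omega> \<le> t \<and> Y \<omega> > 0})"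
      using Ss by (intro fr.finite_measure_mono) auto
    also have "\<dots> = 0" using fr.prob_compl[OF Ss] m1 by simp
    finally show ?thesis using measure_nonneg[of P] by (meson antisym)
  qed
  show ?thesis using part1 part2 by (simp add: a_def b_def)
qed


end
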